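(* For all integers $m\ge1$, $r\ge0$ and $n\ge0$, $$\mathcal E_n(x)=\sum_{k=0}^n\sum_{l=k}^n\binom nl\,\mathcal E_{n-l}\,w_{m,r}(l,k)\,\mathcal D_{m,r}(k,x).$$
   Context: The Euler polynomials are defined by $\sum_{n\ge0}\mathcal E_n(x)\frac{t^n}{n!}=\frac{2e^{xt}}{e^t+1}$ and $\mathcal E_n:=\mathcal E_n(0)$. For integers $m\ge1$, $n,k,r\ge0$: the $r$-Whitney numbers of the first kind $w_{m,r}(n,k)$ are defined by $\sum_{n\ge k}w_{m,r}(n,k)\frac{z^n}{n!}=(1+mz)^{-r/m}\frac{\ln^k(1+mz)}{m^kk!}$; the $r$-Whitney numbers of the second kind $W_{m,r}(n,k)$ by $\sum_{n\ge k}W_{m,r}(n,k)\frac{z^n}{n!}=\frac{e^{rz}}{k!}\left(\frac{e^{mz}-1}{m}\right)^k$; and the $r$-Dowling polynomial is $\mathcal D_{m,r}(n,u):=\sum_{k=0}^nW_{m,r}(n,k)u^k$. *)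

theory Defs
  imports "HOL-Computational_Algebra.Formal_Power_Series"
begin

definition euler_poly :: "nat \<Rightarrow> real \<Rightarrow> real" where
  "euler_poly n x = fact n * fps_nth (fps_const 2 * fps_exp x / (fps_exp 1 + 1)) n"

definition euler_num :: "nat \<Rightarrow> real" where
  "euler_num n = euler_poly n 0"

text \<open>r-Whitney numbers of the first kind:
  EGF (1+mz)^(-r/m) ln^k(1+mz) / (m^k k!).\<close>
definition whitney1 :: "nat \<Rightarrow> nat \<Rightarrow> nat \<Rightarrow> nat \<Rightarrow> real" where
  "whitney1 m r n k = fact n *
     fps_nth ((fps_binomial (- real r / real m) oo (fps_const (real m) * fps_X)) *
       (fps_ln 1 oo (fps_const (real m) * fps_X)) ^ k /
       fps_const (real m ^ k * fact k)) n"

definition whitney2 :: "nat \<Rightarrow> nat \<Rightarrow> nat \<Rightarrow> nat \<Rightarrow> real" where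
  "whitney2 m r n k = fact n *
     fps_nth (fps_exp (real r) / fps_const (fact k) *
       ((fps_exp (real m) - 1) / fps_const (real m)) ^ k) n"

definition dowling :: "nat \<Rightarrow> nat \<Rightarrow> nat \<Rightarrow> real \<Rightarrow> real" where
  "dowling m r n u = (\<Sum>k=0..n. whitney2 m r n k * u ^ k)"

end

theory Submission
  imports Defs
begin
unbundle fps_syntax

lemma comp_coeff:
  fixes A C P :: "real fps"
  assumes P0: "P $ 0 = 0"
  shows "(A * (C oo P)) $ n = (\<Sum>k=0..n. C $ k * (A * P ^ k) $ n)"
proof -
  have z: "(P ^ k) $ j = 0" if "j < k" for j k
    using startsby_zero_power_prefix[OF P0] that by blast
  have "(A * (C oo P)) $ n = (\<Sum>j=0..n. A $ j * (\<Sum>k=0..n-j. C $ k * (P ^ k) $ (n-j)))"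
    by (simp add: fps_mult_nth fps_compose_nth)
  also have "\<dots> = (\<Sum>j=0..n. A $ j * (\<Sum>k=0..n. C $ k * (P ^ k) $ (n-j)))"
  proof (intro sum.cong refl)
    fix j assume "j \<in> {0..n}"
    have "(\<Sum>k=0..n-j. C $ k * (P ^ k) $ (n-j)) = (\<Sum>k=0..n. C $ k * (P ^ k) $ (n-j))"
      by (rule sum.mono_neutral_left) (auto simp: z)
    then show "A $ j * (\<Sum>k=0..n-j. C $ k * (P ^ k) $ (n-j)) = A $ j * (\<Sum>k=0..n. C $ k * (P ^ k) $ (n-j))"
      by simp
  qed
  also have "\<dots> = (\<Sum>j=0..n. \<Sum>k=0..n. C $ k * (A $ j * (P ^ k) $ (n-j)))"
    by (simp add: sum_distrib_left mult.left_commute)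
  also have "\<dots> = (\<Sum>k=0..n. \<Sum>j=0..n. C $ k * (A $ j * (P ^ k) $ (n-j)))"
    by (rule sum.swap)
  also have "\<dots> = (\<Sum>k=0..n. C $ k * (A * P ^ k) $ n)"
    by (simp add: fps_mult_nth sum_distrib_left)
  finally show ?thesis .
qed

lemma exp_ln_binomial: "fps_exp (c::real) oo fps_ln 1 = fps_binomial c"
proof -
  let ?a = "fps_exp c oo fps_ln 1"
  have "fps_deriv ?a = (fps_const c * fps_exp c oo fps_ln 1) * (fps_const 1 * inverse (1 + fps_X))"
    by (simp add: fps_compose_deriv fps_ln_deriv)
  also have "\<dots> = (fps_const c * ?a) / (1 + fps_X)"
    by (simp add: fps_divide_unit flip: fps_const_mult_apply_left)
  finally have "?a = fps_const (?a $ 0) * fps_binomial c"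
    using fps_binomial_ODE_unique by blast
  then show ?thesis by simp
qed

lemma expm1_ln: "(fps_exp (1::real) - 1) oo fps_ln 1 = fps_X"
  using fps_inv_fps_exp_compose(2)[of "1::real"] fps_ln_fps_exp_inv[of "1::real"] by simp

lemma comp_scale:
  fixes a b :: "real fps"
  assumes "b $ 0 = 0"
  shows "a oo (fps_const c * b) = (a oo (fps_const c * fps_X)) oo b"
proof -
  have "fps_const c * b = (fps_const c * fps_X) oo b"
    using assms by (simp flip: fps_const_mult_apply_left)
  then show ?thesis using assms by (simp add: fps_compose_assoc)
qed


lemma div_const: "(a::real fps) / fps_const c = fps_const (1/c) * a" if "c \<noteq> 0"
  using that by (simp add: fps_divide_unit fps_const_inverse mult.commute inverse_eq_divide)

lemma reindex_tri:
  fixes f :: "nat \<Rightarrow> nat \<Rightarrow> real"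
  shows "(\<Sum>k=0..n. \<Sum>l=k..n. f k l) = (\<Sum>l=0..n. \<Sum>k=0..l. (f k l :: real))"
proof -
  have "(\<Sum>k=0..n. \<Sum>l=k..n. f k l) = (\<Sum>k\<in>{0..n}. \<Sum>l\<in>{l\<in>{0..n}. k \<le> l}. f k l)"
    by (intro sum.cong) auto
  also have "\<dots> = (\<Sum>l\<in>{0..n}. \<Sum>k\<in>{k\<in>{0..n}. k \<le> l}. f k l)"
    by (rule sum.swap_restrict) auto
  also have "\<dots> = (\<Sum>l=0..n. \<Sum>k=0..l. f k l)"
    by (intro sum.cong) auto
  finally show ?thesis .
qed

lemma euler_part:
  "(\<Sum>l=0..n. real (n choose l) * euler_num (n - l) * x ^ l) = euler_poly n x"
proof -
  define G :: "real fps" where "G = fps_const 2 * inverse (fps_exp 1 + 1)"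
  have u: "(fps_exp 1 + 1 :: real fps) $ 0 \<noteq> 0" by simp
  have en: "euler_num j = fact j * G $ j" for j
    unfolding euler_num_def euler_poly_def G_def using u by (simp add: fps_divide_unit mult.assoc)
  have ep: "euler_poly n x = fact n * (fps_exp x * G) $ n"
    unfolding euler_poly_def G_def using u by (simp add: fps_divide_unit mult_ac)
  have "(\<Sum>l=0..n. real (n choose l) * euler_num (n - l) * x ^ l)
      = (\<Sum>l=0..n. fact n * (x ^ l / fact l * G $ (n - l)))"
  proof (intro sum.cong refl)
    fix l assume "l \<in> {0..n}"
    then have "l \<le> n" by simp
    then show "real (n choose l) * euler_num (n - l) * x ^ l = fact n * (x ^ l / fact l * G $ (n - l))"
      by (simp add: binomial_fact en field_simps)
  qed
  also have "\<dots> = euler_poly n x"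
    by (simp add: ep fps_mult_nth sum_distrib_left)
  finally show ?thesis .
qed


lemma main_fps:
  fixes m r :: nat and x :: real
  assumes "m \<ge> 1"
  defines "M \<equiv> real m"
  defines "Pm \<equiv> fps_const M * fps_X"
  defines "B \<equiv> fps_binomial (- real r / M) oo Pm"
  defines "L \<equiv> fps_ln 1 oo Pm"
  defines "P \<equiv> fps_const (1/M) * L"
  defines "Q \<equiv> (fps_exp M - 1) / fps_const M"
  shows "B * ((fps_exp (real r) * (fps_exp x oo Q)) oo P) = fps_exp x"
proof -
  have M0: "M \<noteq> 0" using assms(1) by (simp add: M_def)
  have Pm0: "Pm $ 0 = 0" by (simp add: Pm_def)
  have L0: "L $ 0 = 0" by (simp add: L_def)
  have P0: "P $ 0 = 0" by (simp add: P_def L0)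
  have Q': "Q = fps_const (1/M) * (fps_exp M - 1)" unfolding Q_def using M0 by (rule div_const)
  have Q0: "Q $ 0 = 0" by (simp add: Q')
  have eP: "fps_exp c oo P = fps_binomial (c / M) oo Pm" for c :: real
  proof -
    have "fps_exp c oo P = (fps_exp c oo (fps_const (1/M) * fps_X)) oo L"
      unfolding P_def by (rule comp_scale[OF L0])
    also have "\<dots> = fps_exp (c/M) oo (fps_ln 1 oo Pm)" by (simp add: L_def)
    also have "\<dots> = (fps_exp (c/M) oo fps_ln 1) oo Pm" by (simp add: fps_compose_assoc Pm0)
    finally show ?thesis by (simp add: exp_ln_binomial)
  qed
  have BE: "B * (fps_exp (real r) oo P) = 1"
  proof -
    have "B * (fps_exp (real r) oo P) = (fps_binomial (- real r / M) * fps_binomial (real r / M)) oo Pm"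
      by (simp add: B_def eP fps_compose_mult_distrib[OF Pm0])
    also have "\<dots> = 1" by (simp flip: fps_binomial_add_mult)
    finally show ?thesis .
  qed
  have QP: "Q oo P = fps_X"
  proof -
    have "(fps_exp M - 1) oo P = ((fps_exp M - 1) oo (fps_const (1/M) * fps_X)) oo L"
      unfolding P_def by (rule comp_scale[OF L0])
    also have "\<dots> = (fps_exp 1 - 1) oo (fps_ln 1 oo Pm)"
      using M0 by (simp add: L_def fps_compose_sub_distrib)
    also have "\<dots> = ((fps_exp 1 - 1) oo fps_ln 1) oo Pm" by (simp add: fps_compose_assoc Pm0)
    also have "\<dots> = Pm" by (simp add: expm1_ln Pm0)
    finally have "(fps_exp M - 1) oo P = Pm" .
    then have "Q oo P = fps_const (1/M) * Pm"
      by (simp add: Q' flip: fps_const_mult_apply_left)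
    also have "\<dots> = fps_X" using M0 by (simp add: Pm_def mult.assoc[symmetric])
    finally show ?thesis .
  qed
  have "(fps_exp x oo Q) oo P = fps_exp x"
    by (simp add: fps_compose_assoc[OF P0 Q0, symmetric] QP)
  then show ?thesis
    by (simp add: fps_compose_mult_distrib[OF P0] mult.assoc[symmetric] BE)
qed


lemma inner_sum:
  fixes m r l :: nat and x :: real
  assumes "m \<ge> 1"
  shows "(\<Sum>k=0..l. whitney1 m r l k * dowling m r k x) = x ^ l"
proof -
  define M where "M = real m"
  define Pm where "Pm = fps_const M * fps_X"
  define B where "B = fps_binomial (- real r / M) oo Pm"
  define L where "L = fps_ln 1 oo Pm"
  define P where "P = fps_const (1/M) * L"
  define Q where "Q = (fps_exp M - 1) / fps_const M"
  define H where "H = fps_exp (real r) * (fps_exp x oo Q)"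
  have M0: "M \<noteq> 0" using assms(1) by (simp add: M_def)
  have L0: "L $ 0 = 0" by (simp add: L_def Pm_def)
  have P0: "P $ 0 = 0" by (simp add: P_def L0)
  have Q': "Q = fps_const (1/M) * (fps_exp M - 1)" unfolding Q_def using M0 by (rule div_const)
  have Q0: "Q $ 0 = 0" by (simp add: Q')
  have fid: "B * (H oo P) = fps_exp x"
    unfolding B_def H_def P_def L_def Q_def Pm_def M_def by (rule main_fps[OF assms])
  have w1: "whitney1 m r l k = fact l * (B * P ^ k) $ l / fact k" for k
  proof -
    have bp: "B * P ^ k = fps_const (1 / M ^ k) * (B * L ^ k)"
      by (simp add: P_def power_mult_distrib power_one_over mult_ac)
    have bp2: "(B * P ^ k) $ l = (B * L ^ k) $ l / M ^ k"
      unfolding bp by (simp only: fps_mult_left_const_nth) simp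
    have "whitney1 m r l k = fact l * (fps_const (1 / (M ^ k * fact k)) * (B * L ^ k)) $ l"
      unfolding whitney1_def B_def L_def Pm_def M_def
      by (subst div_const) (use M0 in \<open>auto simp: M_def\<close>)
    also have "\<dots> = fact l * ((B * L ^ k) $ l / (M ^ k * fact k))"
      by (simp only: fps_mult_left_const_nth) simp
    also have "\<dots> = fact l * (B * P ^ k) $ l / fact k"
      by (simp add: bp2)
    finally show ?thesis .
  qed
  have w2: "whitney2 m r k j = fact k * (fps_exp (real r) * Q ^ j) $ k / fact j" for k j
  proof -
    have "whitney2 m r k j = fact k * (fps_const (1 / fact j) * (fps_exp (real r) * Q ^ j)) $ k"
      unfolding whitney2_def Q_def M_def
      by (subst div_const) (auto simp: mult_ac)
    then show ?thesis by simp
  qed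
  have dw: "dowling m r k x = fact k * H $ k" for k
    unfolding dowling_def H_def comp_coeff[OF Q0]
    by (simp add: w2 sum_distrib_left mult_ac)
  have "(\<Sum>k=0..l. whitney1 m r l k * dowling m r k x) = fact l * (\<Sum>k=0..l. H $ k * (B * P ^ k) $ l)"
    by (simp add: w1 dw sum_distrib_left mult_ac)
  also have "\<dots> = fact l * (B * (H oo P)) $ l"
    by (simp add: comp_coeff[OF P0])
  also have "\<dots> = x ^ l" by (simp add: fid)
  finally show ?thesis .
qed

theorem mainTheorem15:
  fixes m r n :: nat and x :: real
  assumes "m \<ge> 1"
  shows "euler_poly n x =
    (\<Sum>k=0..n. \<Sum>l=k..n. real (n choose l) * euler_num (n - l) * whitney1 m r l k * dowling m r k x)"
proof -
  have "(\<Sum>k=0..n. \<Sum>l=k..n. real (n choose l) * euler_num (n - l) * whitney1 m r l k * dowling m r k x)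
     = (\<Sum>l=0..n. \<Sum>k=0..l. real (n choose l) * euler_num (n - l) * whitney1 m r l k * dowling m r k x)"
    by (rule reindex_tri)
  also have "\<dots> = (\<Sum>l=0..n. real (n choose l) * euler_num (n - l) * (\<Sum>k=0..l. whitney1 m r l k * dowling m r k x))"
    by (simp add: sum_distrib_left mult_ac)
  also have "\<dots> = (\<Sum>l=0..n. real (n choose l) * euler_num (n - l) * x ^ l)"
    by (simp add: inner_sum[OF assms])
  also have "\<dots> = euler_poly n x" by (rule euler_part)
  finally show ?thesis by simp
qed

end
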